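(* Let $H$ be a $3$-graph, let $K_H=3v(H)^3$, let $C>0$ and $\delta\in\mathbb{R}$, and let $G$ be a $3$-partite $3$-graph with vertex classes $X,Y,Z$, each of size $n$. If $e(G)\ge C n^{3-\delta}$, then there exists a vertex $z\in Z$ such that (1) $e(\mathcal{L}_z)\ge (C/2)\,n^{2-\delta}$, and (2) the number of $H$-forbidden $4$-cycles contained in $\mathcal{L}_z$ is at most $(2K_H/C)\,n^{1+\delta}\,e(\mathcal{L}_z)$.
   Context: A $3$-graph is a $3$-uniform hypergraph; $v(\cdot)$ and $e(\cdot)$ denote numbers of vertices and edges. $G$ is $3$-partite with classes $X,Y,Z$: every edge of $G$ contains exactly one vertex of each class. For $z\in Z$, the link graph $\mathcal{L}_z$ is the bipartite graph between $X$ and $Y$ whose edges are the pairs $xy$ ($x\in X$, $y\in Y$) such that $\{x,y,z\}$ is an edge of $G$. A $4$-cycle between $X$ and $Y$ means a $4$-cycle in the complete bipartite graph on $X\cup Y$ (two vertices in $X$, two in $Y$). For such a $4$-cycle $\mathcal{C}$, a $4$-disk with boundary $\mathcal{C}$ and centre $z\in Z$ is the set of four edges $\{x,y,z\}$ of $G$, $xy\in\mathcal{C}$, which exists exactly when $\mathcal{C}\subseteq\mathcal{L}_z$; so the number of $4$-disks with boundary $\mathcal{C}$ equals the number of $z\in Z$ with $\mathcal{C}\subseteq \mathcal{L}_z$. With $K_H=3v(H)^3$, a $4$-cycle between $X$ and $Y$ is $H$-admissible if it is the boundary of more than $K_H$ distinct $4$-disks in $G$, and $H$-forbidden if it is the boundary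 of at most $K_H$ (possibly $0$) distinct $4$-disks in $G$. *)

theory Defs
  imports Main "HOL-Analysis.Analysis"
begin

definition three_graph :: "'a set \<Rightarrow> 'a set set \<Rightarrow> bool" where
  "three_graph V E \<longleftrightarrow> finite V \<and> (\<forall>e\<in>E. e \<subseteq> V \<and> card e = 3)"

definition three_partite :: "'a set \<Rightarrow> 'a set \<Rightarrow> 'a set \<Rightarrow> 'a set set \<Rightarrow> bool" where
  "three_partite X Y Z E \<longleftrightarrow>
     X \<inter> Y = {} \<and> X \<inter> Z = {} \<and> Y \<inter> Z = {} \<and>
     (\<forall>e\<in>E. \<exists>x\<in>X. \<exists>y\<in>Y. \<exists>z\<in>Z. e = {x, y, z})"

definition link :: "'a set \<Rightarrow> 'a set \<Rightarrow> 'a set set \<Rightarrow> 'a \<Rightarrow> ('a \<times> 'a) set" where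
  "link X Y E z = {(x, y). x \<in> X \<and> y \<in> Y \<and> {x, y, z} \<in> E}"

text \<open>4-cycles in the complete bipartite graph between X and Y, each given by its
  edge set (a 4-cycle is determined by its edge set).\<close>
definition cycles4 :: "'a set \<Rightarrow> 'a set \<Rightarrow> ('a \<times> 'a) set set" where
  "cycles4 X Y = {{(x1, y1), (x1, y2), (x2, y1), (x2, y2)} | x1 x2 y1 y2.
      x1 \<in> X \<and> x2 \<in> X \<and> y1 \<in> Y \<and> y2 \<in> Y \<and> x1 \<noteq> x2 \<and> y1 \<noteq> y2}"

definition num_disks :: "'a set \<Rightarrow> 'a set \<Rightarrow> 'a set \<Rightarrow> 'a set set \<Rightarrow> ('a \<times> 'a) set \<Rightarrow> nat" where
  "num_disks X Y Z E Cy = card {z \<in> Z. Cy \<subseteq> link X Y E z}"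

definition K_H :: "'b set \<Rightarrow> nat" where
  "K_H VH = 3 * card VH ^ 3"

definition forbidden :: "'b set \<Rightarrow> 'a set \<Rightarrow> 'a set \<Rightarrow> 'a set \<Rightarrow> 'a set set \<Rightarrow> ('a \<times> 'a) set \<Rightarrow> bool" where
  "forbidden VH X Y Z E Cy \<longleftrightarrow> Cy \<in> cycles4 X Y \<and> num_disks X Y Z E Cy \<le> K_H VH"

definition admissible :: "'b set \<Rightarrow> 'a set \<Rightarrow> 'a set \<Rightarrow> 'a set \<Rightarrow> 'a set set \<Rightarrow> ('a \<times> 'a) set \<Rightarrow> bool" where
  "admissible VH X Y Z E Cy \<longleftrightarrow> Cy \<in> cycles4 X Y \<and> num_disks X Y Z E Cy > K_H VH"

end

theory Submission
  imports Defs
begin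

lemma card_filter_sum: "finite A \<Longrightarrow> card {x\<in>A. P x} = (\<Sum>x\<in>A. if P x then 1 else (0::nat))"
  using sum.inter_filter[of A "\<lambda>_. 1::nat" P] by simp

lemma cycles4_card:
  assumes "finite X" "finite Y" "card X = n" "card Y = n"
  shows "card (cycles4 X Y) \<le> n^4" "finite (cycles4 X Y)"
proof -
  have s: "cycles4 X Y \<subseteq> (\<lambda>(x1,x2,y1,y2). {(x1, y1), (x1, y2), (x2, y1), (x2, y2)}) ` (X \<times> X \<times> Y \<times> Y)"
    unfolding cycles4_def by force
  have f: "finite (X \<times> X \<times> Y \<times> Y)" using assms by simp
  show "finite (cycles4 X Y)" using finite_subset[OF s finite_imageI[OF f]] .
  have "card (cycles4 X Y) \<le> card ((\<lambda>(x1,x2,y1,y2). {(x1, y1), (x1, y2), (x2, y1), (x2, y2)}) ` (X \<times> X \<times> Y \<times> Y))"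
    by (rule card_mono[OF finite_imageI[OF f] s])
  also have "\<dots> \<le> card (X \<times> X \<times> Y \<times> Y)" by (rule card_image_le[OF f])
  also have "\<dots> = card X * (card X * (card Y * card Y))" by (simp add: card_cartesian_product)
  also have "\<dots> = n^4" using assms(3,4) by (simp add: power4_eq_xxxx)
  finally show "card (cycles4 X Y) \<le> n^4" .
qed

theorem lemma3p1:
  fixes VH :: "'b set" and EH :: "'b set set"
    and X Y Z :: "'a set" and E :: "'a set set"
    and n :: nat and C \<delta> :: real
  assumes "three_graph VH EH"
    and "three_partite X Y Z E"
    and "finite X" "finite Y" "finite Z"
    and "card X = n" "card Y = n" "card Z = n" "n \<ge> 1"
    and "C > 0"
    and "real (card E) \<ge> C * real n powr (3 - \<delta>)"
  shows "\<exists>z\<in>Z. real (card (link X Y E z)) \<ge> (C / 2) * real n powr (2 - \<delta>) \<and>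
           real (card {Cy. forbidden VH X Y Z E Cy \<and> Cy \<subseteq> link X Y E z})
             \<le> (2 * real (K_H VH) / C) * real n powr (1 + \<delta>) * real (card (link X Y E z))"
proof (rule ccontr)
  assume neg: "\<not> ?thesis"
  define L where "L z = link X Y E z" for z
  define Fb where "Fb = {Cy. forbidden VH X Y Z E Cy}"
  define K where "K = K_H VH"
  define e where "e z = real (card (L z))" for z
  define f where "f z = real (card {Cy\<in>Fb. Cy \<subseteq> L z})" for z
  have fb_eq: "{Cy. forbidden VH X Y Z E Cy \<and> Cy \<subseteq> link X Y E z} = {Cy\<in>Fb. Cy \<subseteq> L z}" for z
    unfolding Fb_def L_def by auto
  have Fbsub: "Fb \<subseteq> cycles4 X Y" unfolding Fb_def forbidden_def by auto
  note c4 = cycles4_card[OF assms(3,4,6,7)]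
  have finFb: "finite Fb" using finite_subset[OF Fbsub c4(2)] .
  have finL: "finite (L z)" for z
    using finite_subset[of "L z" "X \<times> Y"] assms(3,4) unfolding L_def link_def by auto
  have npos: "real n > 0" using assms(9) by simp
  have sumf_nat: "(\<Sum>z\<in>Z. card {Cy\<in>Fb. Cy \<subseteq> L z}) \<le> K * n^4"
  proof -
    have "(\<Sum>z\<in>Z. card {Cy\<in>Fb. Cy \<subseteq> L z}) = (\<Sum>z\<in>Z. \<Sum>Cy\<in>Fb. if Cy \<subseteq> L z then 1 else (0::nat))"
      using finFb by (simp add: card_filter_sum)
    also have "\<dots> = (\<Sum>Cy\<in>Fb. \<Sum>z\<in>Z. if Cy \<subseteq> L z then 1 else (0::nat))"
      by (rule sum.swap)
    also have "\<dots> = (\<Sum>Cy\<in>Fb. num_disks X Y Z E Cy)"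
      using assms(5) by (simp add: card_filter_sum num_disks_def L_def)
    also have "\<dots> \<le> (\<Sum>Cy\<in>Fb. K)"
      by (rule sum_mono) (simp add: Fb_def forbidden_def K_def)
    also have "\<dots> = K * card Fb" by simp
    also have "\<dots> \<le> K * card (cycles4 X Y)" by (simp add: card_mono[OF c4(2) Fbsub])
    also have "\<dots> \<le> K * n^4" using c4(1) by simp
    finally show ?thesis .
  qed
  have sumf: "(\<Sum>z\<in>Z. f z) \<le> real K * real n ^ 4"
  proof -
    have "(\<Sum>z\<in>Z. f z) = real (\<Sum>z\<in>Z. card {Cy\<in>Fb. Cy \<subseteq> L z})" unfolding f_def by simp
    also have "\<dots> \<le> real (K * n^4)" using sumf_nat by linarith
    finally show ?thesis by simp
  qed
  have sume: "real (card E) \<le> (\<Sum>z\<in>Z. e z)"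
  proof -
    have fS: "finite (SIGMA z:Z. L z)" by (rule finite_SigmaI[OF assms(5) finL])
    have s: "E \<subseteq> (\<lambda>(z,x,y). {x,y,z}) ` (SIGMA z:Z. L z)"
    proof
      fix ed assume edE: "ed \<in> E"
      have all: "\<forall>e\<in>E. \<exists>x\<in>X. \<exists>y\<in>Y. \<exists>z\<in>Z. e = {x, y, z}"
        using assms(2) unfolding three_partite_def by (elim conjE)
      obtain x y z where xyz: "x\<in>X" "y\<in>Y" "z\<in>Z" "ed = {x,y,z}"
        using bspec[OF all edE] by (elim bexE) (rule that; assumption)
      have inE: "{x,y,z} \<in> E" using edE xyz(4) by (simp only:)
      have "(x,y) \<in> L z" unfolding L_def link_def using xyz(1,2) inE by (simp only: mem_Collect_eq case_prod_conv simp_thms)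
      hence mem: "(z,x,y) \<in> (SIGMA z:Z. L z)" using xyz(3) by (rule SigmaI[rotated])
      have eq: "ed = (\<lambda>(z,x,y). {x,y,z}) (z,x,y)" using xyz(4) by simp
      show "ed \<in> (\<lambda>(z,x,y). {x,y,z}) ` (SIGMA z:Z. L z)"
        using eq mem by (rule image_eqI)
    qed
    have "card E \<le> card (SIGMA z:Z. L z)"
      by (rule order_trans[OF card_mono[OF finite_imageI[OF fS] s] card_image_le[OF fS]])
    also have "\<dots> = (\<Sum>z\<in>Z. card (L z))" using finL by (intro card_SigmaI[OF assms(5)]) blast
    finally have "real (card E) \<le> real (\<Sum>z\<in>Z. card (L z))" by (simp only: of_nat_le_iff)
    thus ?thesis unfolding e_def of_nat_sum .
  qed
  define A where "A = {z\<in>Z. e z \<ge> (C/2) * real n powr (2 - \<delta>)}"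
  have badA: "2 * real K * real n powr (1 + \<delta>) * e z < C * f z" if "z \<in> A" for z
  proof -
    have ez: "e z = real (card (link X Y E z))" unfolding e_def L_def ..
    have fz: "f z = real (card {Cy. forbidden VH X Y Z E Cy \<and> Cy \<subseteq> link X Y E z})"
      unfolding f_def fb_eq ..
    have zZ: "z \<in> Z" and ge: "e z \<ge> (C/2) * real n powr (2 - \<delta>)" using that unfolding A_def by auto
    from neg have "\<forall>z\<in>Z. \<not> (real (card (link X Y E z)) \<ge> (C / 2) * real n powr (2 - \<delta>) \<and>
           real (card {Cy. forbidden VH X Y Z E Cy \<and> Cy \<subseteq> link X Y E z})
             \<le> (2 * real (K_H VH) / C) * real n powr (1 + \<delta>) * real (card (link X Y E z)))" by blast
    hence "\<not> (e z \<ge> (C / 2) * real n powr (2 - \<delta>) \<and> f z \<le> (2 * real K / C) * real n powr (1 + \<delta>) * e z)"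
      using zZ unfolding ez fz K_def by blast
    hence "\<not> (f z \<le> (2 * real K / C) * real n powr (1 + \<delta>) * e z)" using ge by blast
    hence "(2 * real K / C) * real n powr (1 + \<delta>) * e z < f z" by simp
    hence "C * ((2 * real K / C) * real n powr (1 + \<delta>) * e z) < C * f z"
      using assms(10) by (rule mult_strict_left_mono)
    moreover have "C * ((2 * real K / C) * real n powr (1 + \<delta>) * e z) = 2 * real K * real n powr (1 + \<delta>) * e z"
      using assms(10) by simp
    ultimately show ?thesis by simp
  qed
  have notA: "e z < (C/2) * real n powr (2 - \<delta>)" if "z \<in> Z - A" for z
    using that unfolding A_def by auto
  have AZ: "A \<subseteq> Z" unfolding A_def by auto
  have finA: "finite A" using finite_subset[OF AZ assms(5)] .
  have split: "(\<Sum>z\<in>Z. e z) = (\<Sum>z\<in>A. e z) + (\<Sum>z\<in>Z-A. e z)"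
    using sum.subset_diff[OF AZ assms(5), of e] by linarith
  have "(\<Sum>z\<in>Z-A. e z) \<le> (\<Sum>z\<in>Z-A. (C/2) * real n powr (2 - \<delta>))"
    by (rule sum_mono) (use notA in force)
  also have "\<dots> = real (card (Z - A)) * ((C/2) * real n powr (2 - \<delta>))" by simp
  also have "\<dots> \<le> real n * ((C/2) * real n powr (2 - \<delta>))"
  proof (rule mult_right_mono)
    show "real (card (Z - A)) \<le> real n" using card_mono[OF assms(5), of "Z-A"] assms(8) by auto
    show "0 \<le> C / 2 * real n powr (2 - \<delta>)" using assms(10) by simp
  qed
  also have "\<dots> = (C/2) * real n powr (3 - \<delta>)"
  proof -
    have "real n * real n powr (2 - \<delta>) = real n powr (3 - \<delta>)"
      using npos by (simp add: powr_add[symmetric] powr_mult_base)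
    thus ?thesis by (metis mult.left_commute)
  qed
  finally have restle: "(\<Sum>z\<in>Z-A. e z) \<le> (C/2) * real n powr (3 - \<delta>)" .
  have SA: "(\<Sum>z\<in>A. e z) \<ge> (C/2) * real n powr (3 - \<delta>)"
    using sume split restle assms(11) by linarith
  have Ane: "A \<noteq> {}"
  proof
    assume "A = {}"
    hence "(C/2) * real n powr (3 - \<delta>) \<le> 0" using SA by simp
    moreover have "(C/2) * real n powr (3 - \<delta>) > 0" using assms(10) npos by simp
    ultimately show False by simp
  qed
  have f0: "f z \<ge> 0" for z unfolding f_def by simp
  have "(\<Sum>z\<in>A. 2 * real K * real n powr (1 + \<delta>) * e z) < (\<Sum>z\<in>A. C * f z)"
    by (rule sum_strict_mono[OF finA Ane badA])
  also have "\<dots> = C * (\<Sum>z\<in>A. f z)" by (simp add: sum_distrib_left)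
  also have "\<dots> \<le> C * (\<Sum>z\<in>Z. f z)"
    using assms(10) sum_mono2[OF assms(5) AZ, of f] f0 by simp
  also have "\<dots> \<le> C * (real K * real n ^ 4)" using assms(10) sumf by simp
  finally have lt: "2 * real K * real n powr (1 + \<delta>) * (\<Sum>z\<in>A. e z) < C * (real K * real n ^ 4)"
    by (simp add: sum_distrib_left mult.assoc)
  have "2 * real K * real n powr (1 + \<delta>) * ((C/2) * real n powr (3 - \<delta>))
        \<le> 2 * real K * real n powr (1 + \<delta>) * (\<Sum>z\<in>A. e z)"
    by (rule mult_left_mono[OF SA]) simp
  moreover have "2 * real K * real n powr (1 + \<delta>) * ((C/2) * real n powr (3 - \<delta>)) = C * (real K * real n ^ 4)"
  proof -
    have "real n powr (1 + \<delta>) * real n powr (3 - \<delta>) = real n powr 4"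
      using npos by (simp add: powr_add[symmetric])
    also have "\<dots> = real n ^ 4" using npos by (simp add: powr_realpow)
    finally have h: "real n powr (1 + \<delta>) * real n powr (3 - \<delta>) = real n ^ 4" .
    show ?thesis using h by (simp add: field_simps)
  qed
  ultimately show False using lt by linarith
qed

end
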